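(* Let $D$ be a digraph and let $S$ be the set of all sources and sinks of $D$. Then $\operatorname{bw}(u(D))-|S|\le\operatorname{dbw}(D)\le\operatorname{bw}(u(D))$.
   Context: All digraphs are finite and loopless. A source has no incoming edges, a sink no outgoing edges. $u(D)$ is the undirected multigraph with one edge $xy$ per directed edge $\vec{xy}$. Branch-width of an undirected multigraph $G$: minimum over pairs $(T,\tau)$ ($T$ a tree of maximum degree at most three, $\tau$ a bijection from leaves of $T$ onto $E(G)$) of the maximum over edges $t$ of $T$ of the number of vertices incident both with an edge of $\tau(Y)$ and an edge of $E(G)\setminus\tau(Y)$, $Y$ being the leaves on one side of $T-t$ (width 0 if $T$ has no edges). Directed branch-width $\operatorname{dbw}(D)$: same, with $\beta$ a bijection from leaves onto $E(D)$ and the order of $t$ equal to $|S^V_{\beta(Y)}\cup S^V_{E(D)\setminus\beta(Y)}|$, where $S^V_X=\{y: \exists x,z,\ \vec{xy}\in E(D)\setminus X,\ \vec{yz}\in X\}$. *)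

theory Defs
  imports Main "Graph_Theory.Digraph"
begin

text \<open>A tree is given by a finite node set N and a set TE of undirected edges,
each a two-element subset of N. Every finite tree is isomorphic to one on nat nodes.\<close>

definition tree_adj :: "nat set set \<Rightarrow> (nat \<times> nat) set" where
  "tree_adj TE = {(x, y). {x, y} \<in> TE}"

definition tdeg :: "nat set set \<Rightarrow> nat \<Rightarrow> nat" where
  "tdeg TE v = card {e \<in> TE. v \<in> e}"

definition is_tree :: "nat set \<Rightarrow> nat set set \<Rightarrow> bool" where
  "is_tree N TE \<longleftrightarrow> finite N
     \<and> (\<forall>e\<in>TE. e \<subseteq> N \<and> card e = 2)
     \<and> (\<forall>x\<in>N. \<forall>y\<in>N. (x, y) \<in> (tree_adj TE)\<^sup>*)
     \<and> card TE + 1 = card N"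

definition cubic_tree :: "nat set \<Rightarrow> nat set set \<Rightarrow> bool" where
  "cubic_tree N TE \<longleftrightarrow> (is_tree N TE \<or> (N = {} \<and> TE = {})) \<and> (\<forall>v\<in>N. tdeg TE v \<le> 3)"

definition tleaves :: "nat set \<Rightarrow> nat set set \<Rightarrow> nat set" where
  "tleaves N TE = {v \<in> N. tdeg TE v \<le> 1}"

definition tside :: "nat set \<Rightarrow> nat set set \<Rightarrow> nat \<Rightarrow> nat \<Rightarrow> nat set" where
  "tside N TE a b = {l \<in> tleaves N TE. (a, l) \<in> (tree_adj (TE - {{a, b}}))\<^sup>*}"

definition is_branch_decomp :: "'e set \<Rightarrow> nat set \<Rightarrow> nat set set \<Rightarrow> (nat \<Rightarrow> 'e) \<Rightarrow> bool" where
  "is_branch_decomp E N TE \<beta> \<longleftrightarrow> cubic_tree N TE \<and> bij_betw \<beta> (tleaves N TE) E"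

definition decomp_width :: "('e set \<Rightarrow> nat) \<Rightarrow> nat set \<Rightarrow> nat set set \<Rightarrow> (nat \<Rightarrow> 'e) \<Rightarrow> nat" where
  "decomp_width ord N TE \<beta> =
     Max ({0} \<union> {ord (\<beta> ` tside N TE a b) | a b. {a, b} \<in> TE})"

definition branch_width_wrt :: "'e set \<Rightarrow> ('e set \<Rightarrow> nat) \<Rightarrow> nat" where
  "branch_width_wrt E ord =
     (LEAST k. \<exists>N TE \<beta>. is_branch_decomp E N TE \<beta> \<and> decomp_width ord N TE \<beta> = k)"

text \<open>u(D) has edge set arcs D, the edge e joining tail D e and head D e.\<close>
definition arc_ends :: "('a, 'b) pre_digraph \<Rightarrow> 'b \<Rightarrow> 'a set" where
  "arc_ends D e = {tail D e, head D e}"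

definition u_order :: "('a, 'b) pre_digraph \<Rightarrow> 'b set \<Rightarrow> nat" where
  "u_order D X = card {v. (\<exists>e\<in>X. v \<in> arc_ends D e) \<and> (\<exists>e\<in>arcs D - X. v \<in> arc_ends D e)}"

definition bw_u :: "('a, 'b) pre_digraph \<Rightarrow> nat" where
  "bw_u D = branch_width_wrt (arcs D) (u_order D)"

definition SV :: "('a, 'b) pre_digraph \<Rightarrow> 'b set \<Rightarrow> 'a set" where
  "SV D X = {y. \<exists>e\<in>arcs D - X. \<exists>f\<in>X. head D e = y \<and> tail D f = y}"

definition d_order :: "('a, 'b) pre_digraph \<Rightarrow> 'b set \<Rightarrow> nat" where
  "d_order D X = card (SV D X \<union> SV D (arcs D - X))"

definition dbw :: "('a, 'b) pre_digraph \<Rightarrow> nat" where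
  "dbw D = branch_width_wrt (arcs D) (d_order D)"

definition sources_sinks :: "('a, 'b) pre_digraph \<Rightarrow> 'a set" where
  "sources_sinks D = {v \<in> verts D. in_arcs D v = {} \<or> out_arcs D v = {}}"

end

theory Submission
  imports Defs
begin

lemma fin_edges_set:
  assumes "is_branch_decomp E N TE \<beta>"
  shows "finite {f a b | a b. {a, b} \<in> TE}"
proof -
  have ct: "cubic_tree N TE" using assms unfolding is_branch_decomp_def by simp
  have sub: "\<forall>e\<in>TE. e \<subseteq> N" and fN: "finite N"
    using ct unfolding cubic_tree_def is_tree_def by auto
  have "{f a b | a b. {a, b} \<in> TE} \<subseteq> (\<lambda>(a,b). f a b) ` (N \<times> N)"
  proof
    fix x assume "x \<in> {f a b | a b. {a, b} \<in> TE}"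
    then obtain a b where x: "x = f a b" and ab: "{a,b} \<in> TE" by blast
    have "{a,b} \<subseteq> N" using sub ab by blast
    then have "(a,b) \<in> N \<times> N" by simp
    then show "x \<in> (\<lambda>(a,b). f a b) ` (N \<times> N)" unfolding x by force
  qed
  moreover have "finite ((\<lambda>(a,b). f a b) ` (N \<times> N))" using fN by simp
  ultimately show ?thesis by (rule finite_subset)
qed

lemma side_sub:
  assumes "is_branch_decomp E N TE \<beta>"
  shows "\<beta> ` tside N TE a b \<subseteq> E"
  using assms unfolding is_branch_decomp_def tside_def bij_betw_def by auto

lemma decomp_width_mono:
  assumes bd: "is_branch_decomp E N TE \<beta>"
    and h: "\<And>X. X \<subseteq> E \<Longrightarrow> o1 X \<le> o2 X + (c::nat)"
  shows "decomp_width o1 N TE \<beta> \<le> decomp_width o2 N TE \<beta> + c"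
proof -
  let ?A1 = "{o1 (\<beta> ` tside N TE a b) | a b. {a, b} \<in> TE}"
  let ?A2 = "{o2 (\<beta> ` tside N TE a b) | a b. {a, b} \<in> TE}"
  have f2: "finite ({0} \<union> ?A2)" using fin_edges_set[OF bd] by simp
  have f1: "finite ({0} \<union> ?A1)" using fin_edges_set[OF bd] by simp
  have "\<forall>x\<in>{0} \<union> ?A1. x \<le> Max ({0} \<union> ?A2) + c"
  proof
    fix x assume "x \<in> {0} \<union> ?A1"
    then show "x \<le> Max ({0} \<union> ?A2) + c"
    proof
      assume "x \<in> {0}" then show ?thesis by simp
    next
      assume "x \<in> ?A1"
      then obtain a b where x: "x = o1 (\<beta> ` tside N TE a b)" and ab: "{a,b} \<in> TE" by blast
      have "x \<le> o2 (\<beta> ` tside N TE a b) + c" unfolding x by (rule h[OF side_sub[OF bd]])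
      moreover have "o2 (\<beta> ` tside N TE a b) \<in> {0} \<union> ?A2" using ab by blast
      then have "o2 (\<beta> ` tside N TE a b) \<le> Max ({0} \<union> ?A2)"
        using f2 by (rule Max_ge[rotated])
      ultimately show ?thesis by simp
    qed
  qed
  then have "Max ({0} \<union> ?A1) \<le> Max ({0} \<union> ?A2) + c"
    using f1 by (subst Max_le_iff) auto
  then show ?thesis unfolding decomp_width_def .
qed

lemma bww_mono:
  assumes h: "\<And>X. X \<subseteq> E \<Longrightarrow> o1 X \<le> o2 X + (c::nat)"
  shows "branch_width_wrt E o1 \<le> branch_width_wrt E o2 + c"
proof (cases "\<exists>N TE \<beta>. is_branch_decomp E N TE \<beta>")
  case True
  let ?P2 = "\<lambda>k. \<exists>N TE \<beta>. is_branch_decomp E N TE \<beta> \<and> decomp_width o2 N TE \<beta> = k"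
  let ?P1 = "\<lambda>k. \<exists>N TE \<beta>. is_branch_decomp E N TE \<beta> \<and> decomp_width o1 N TE \<beta> = k"
  from True obtain N TE \<beta> where "is_branch_decomp E N TE \<beta>" by blast
  then have "?P2 (decomp_width o2 N TE \<beta>)" by blast
  then have "?P2 (Least ?P2)" by (rule LeastI)
  then obtain N TE \<beta> where bd: "is_branch_decomp E N TE \<beta>"
    and w: "decomp_width o2 N TE \<beta> = Least ?P2" by blast
  have "Least ?P1 \<le> decomp_width o1 N TE \<beta>"
    using bd by (intro Least_le) blast
  also have "\<dots> \<le> decomp_width o2 N TE \<beta> + c" by (rule decomp_width_mono[OF bd h])
  finally show ?thesis unfolding branch_width_wrt_def using w by simp
next
  case False
  then show ?thesis unfolding branch_width_wrt_def by simp
qed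

lemma bnd_sub_verts:
  assumes "wf_digraph D"
  shows "{v. (\<exists>e\<in>X. v \<in> arc_ends D e) \<and> (\<exists>e\<in>arcs D - X. v \<in> arc_ends D e)} \<subseteq> verts D"
proof
  fix v assume "v \<in> {v. (\<exists>e\<in>X. v \<in> arc_ends D e) \<and> (\<exists>e\<in>arcs D - X. v \<in> arc_ends D e)}"
  then obtain e where e: "e \<in> arcs D" "v \<in> arc_ends D e" by blast
  have "tail D e \<in> verts D" "head D e \<in> verts D"
    using wf_digraph.tail_in_verts[OF assms e(1)] wf_digraph.head_in_verts[OF assms e(1)] by simp_all
  then show "v \<in> verts D" using e(2) unfolding arc_ends_def by auto
qed

lemma SV_sub:
  assumes "X \<subseteq> arcs D"
  shows "SV D X \<union> SV D (arcs D - X) \<subseteq>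
     {v. (\<exists>e\<in>X. v \<in> arc_ends D e) \<and> (\<exists>e\<in>arcs D - X. v \<in> arc_ends D e)}"
proof
  fix v assume "v \<in> SV D X \<union> SV D (arcs D - X)"
  then show "v \<in> {v. (\<exists>e\<in>X. v \<in> arc_ends D e) \<and> (\<exists>e\<in>arcs D - X. v \<in> arc_ends D e)}"
  proof
    assume "v \<in> SV D X"
    then obtain e f where ef: "e \<in> arcs D - X" "f \<in> X" "head D e = v" "tail D f = v"
      unfolding SV_def by auto
    have "v \<in> arc_ends D f" "v \<in> arc_ends D e" using ef unfolding arc_ends_def by auto
    then show ?thesis using ef(1,2) by auto
  next
    assume "v \<in> SV D (arcs D - X)"
    then obtain e f where ef: "e \<in> X" "f \<in> arcs D - X" "head D e = v" "tail D f = v"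
      unfolding SV_def by auto
    have "v \<in> arc_ends D f" "v \<in> arc_ends D e" using ef unfolding arc_ends_def by auto
    then show ?thesis using ef(1,2) by auto
  qed
qed

lemma bnd_sub_SV:
  assumes "wf_digraph D" "X \<subseteq> arcs D"
  shows "{v. (\<exists>e\<in>X. v \<in> arc_ends D e) \<and> (\<exists>e\<in>arcs D - X. v \<in> arc_ends D e)}
     \<subseteq> SV D X \<union> SV D (arcs D - X) \<union> sources_sinks D"
proof
  fix v assume v: "v \<in> {v. (\<exists>e\<in>X. v \<in> arc_ends D e) \<and> (\<exists>e\<in>arcs D - X. v \<in> arc_ends D e)}"
  then obtain e1 e2 where e1: "e1 \<in> X" "v \<in> arc_ends D e1" and e2: "e2 \<in> arcs D - X" "v \<in> arc_ends D e2"
    by blast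
  have vv: "v \<in> verts D" using v bnd_sub_verts[OF assms(1)] by blast
  show "v \<in> SV D X \<union> SV D (arcs D - X) \<union> sources_sinks D"
  proof (rule ccontr)
    assume nv: "v \<notin> SV D X \<union> SV D (arcs D - X) \<union> sources_sinks D"
    then have "in_arcs D v \<noteq> {}" "out_arcs D v \<noteq> {}" using vv unfolding sources_sinks_def by auto
    then obtain a b where a: "a \<in> arcs D" "head D a = v" and b: "b \<in> arcs D" "tail D b = v"
      by (auto simp: in_arcs_def out_arcs_def)
    have n1: "\<And>e f. e \<in> arcs D \<Longrightarrow> e \<notin> X \<Longrightarrow> f \<in> X \<Longrightarrow> head D e = v \<Longrightarrow> tail D f = v \<Longrightarrow> False"
    proof -
      fix e f assume "e \<in> arcs D" "e \<notin> X" "f \<in> X" "head D e = v" "tail D f = v"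
      then have "v \<in> SV D X" unfolding SV_def by blast
      then show False using nv by blast
    qed
    have n2: "\<And>e f. e \<in> X \<Longrightarrow> f \<in> arcs D \<Longrightarrow> f \<notin> X \<Longrightarrow> head D e = v \<Longrightarrow> tail D f = v \<Longrightarrow> False"
    proof -
      fix e f assume "e \<in> X" "f \<in> arcs D" "f \<notin> X" "head D e = v" "tail D f = v"
      then have "v \<in> SV D (arcs D - X)" unfolding SV_def using assms(2) by blast
      then show False using nv by blast
    qed
    have e2': "e2 \<in> arcs D" "e2 \<notin> X" "tail D e2 = v \<or> head D e2 = v"
      using e2 unfolding arc_ends_def by auto
    have e1': "e1 \<in> arcs D" "tail D e1 = v \<or> head D e1 = v"
      using e1 assms(2) unfolding arc_ends_def by auto
    show False
    proof (cases "a \<in> X")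
      case True
      have bX: "b \<in> X"
      proof (rule ccontr)
        assume "b \<notin> X"
        show False by (rule n2[OF True b(1) \<open>b \<notin> X\<close> a(2) b(2)])
      qed
      from e2'(3) show False
      proof
        assume "tail D e2 = v" then show False by (rule n2[OF True e2'(1) e2'(2) a(2)])
      next
        assume "head D e2 = v" then show False by (rule n1[OF e2'(1) e2'(2) bX _ b(2)])
      qed
    next
      case False
      have bX: "b \<notin> X"
      proof
        assume "b \<in> X"
        show False by (rule n1[OF a(1) False \<open>b \<in> X\<close> a(2) b(2)])
      qed
      from e1'(2) show False
      proof
        assume "tail D e1 = v" then show False by (rule n1[OF a(1) False e1(1) a(2)])
      next
        assume "head D e1 = v" then show False by (rule n2[OF e1(1) b(1) bX _ b(2)])
      qed
    qed
  qed
qed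

theorem mainTheorem10:
  fixes D :: "('a, 'b) pre_digraph"
  assumes "fin_digraph D" and "loopfree_digraph D"
  shows "int (bw_u D) - int (card (sources_sinks D)) \<le> int (dbw D)
       \<and> dbw D \<le> bw_u D"
proof -
  have wf: "wf_digraph D" using assms(1) by (simp add: fin_digraph_def)
  have fv: "finite (verts D)" using assms(1) by (simp add: fin_digraph_def fin_digraph_axioms_def)
  have fS: "finite (sources_sinks D)" using fv unfolding sources_sinks_def by simp
  have h1: "d_order D X \<le> u_order D X + 0" if "X \<subseteq> arcs D" for X
  proof -
    have "finite {v. (\<exists>e\<in>X. v \<in> arc_ends D e) \<and> (\<exists>e\<in>arcs D - X. v \<in> arc_ends D e)}"
      using bnd_sub_verts[OF wf] fv by (rule finite_subset)
    then have "card (SV D X \<union> SV D (arcs D - X)) \<le> card {v. (\<exists>e\<in>X. v \<in> arc_ends D e) \<and> (\<exists>e\<in>arcs D - X. v \<in> arc_ends D e)}"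
      using SV_sub[OF that] by (rule card_mono)
    then show ?thesis unfolding d_order_def u_order_def by simp
  qed
  have h2: "u_order D X \<le> d_order D X + card (sources_sinks D)" if "X \<subseteq> arcs D" for X
  proof -
    have fSV: "finite (SV D X \<union> SV D (arcs D - X))"
      using SV_sub[OF that] bnd_sub_verts[OF wf] fv by (meson finite_subset)
    have "u_order D X \<le> card (SV D X \<union> SV D (arcs D - X) \<union> sources_sinks D)"
      unfolding u_order_def using bnd_sub_SV[OF wf that] fSV fS by (intro card_mono) auto
    also have "\<dots> \<le> d_order D X + card (sources_sinks D)"
      unfolding d_order_def by (rule card_Un_le)
    finally show ?thesis .
  qed
  have "dbw D \<le> bw_u D + 0" unfolding dbw_def bw_u_def by (rule bww_mono, rule h1)
  moreover have "bw_u D \<le> dbw D + card (sources_sinks D)"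
    unfolding dbw_def bw_u_def by (rule bww_mono, rule h2)
  ultimately show ?thesis by simp
qed

end
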